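(* Any zero-error $O\left(\frac{n}{s}\right)$-pseudo-deterministic streaming algorithm for \textsc{Find-Duplicate} must use $\Omega\left(\frac{s}{\log n}\right)$ space.
   Context: \textsc{Find-Duplicate}: the input is a stream of $3n/2$ integers, each in $\{1,\dots,n\}$; the goal is to output an integer that appears at least twice in the stream. A randomized algorithm is zero-error if with probability one it either outputs a valid output or outputs $\bot$. An algorithm $A$ is $k$-pseudo-deterministic if for every valid input $x$ there is a set $S(x)$ of size at most $k$ such that $\Pr_r[A(x,r)\in S(x)]\ge \frac{k+1}{k+2}$. Space is measured in bits of memory of the one-pass streaming algorithm. *)

theory Defs
  imports "HOL-Probability.Probability"
begin

text \<open>A deterministic one-pass streaming algorithm: initial state, transition
  function (state, next stream symbol) to state, and an output function on the final
  state. Output None stands for bottom. States are natural numbers; an algorithm uses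
  S bits of memory if all its states lie in the range below 2 to the S.\<close>
type_synonym det_alg = "nat \<times> (nat \<Rightarrow> nat \<Rightarrow> nat) \<times> (nat \<Rightarrow> nat option)"

definition run_det :: "det_alg \<Rightarrow> nat list \<Rightarrow> nat option" where
  "run_det D xs = (case D of (q0, delta, out) \<Rightarrow> out (foldl delta q0 xs))"

text \<open>A randomized streaming algorithm is a probability distribution over
  deterministic ones (the random string selects the deterministic algorithm).\<close>
type_synonym rand_alg = "det_alg pmf"

definition fd_input :: "nat \<Rightarrow> nat list \<Rightarrow> bool" where
  "fd_input n xs \<longleftrightarrow> length xs = 3 * n div 2 \<and> set xs \<subseteq> {1..n}"

definition is_dup :: "nat list \<Rightarrow> nat \<Rightarrow> bool" where
  "is_dup xs a \<longleftrightarrow> 2 \<le> length (filter (\<lambda>y. y = a) xs)"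

definition zero_error :: "nat \<Rightarrow> rand_alg \<Rightarrow> bool" where
  "zero_error n A \<longleftrightarrow> (\<forall>xs. fd_input n xs \<longrightarrow>
     (\<forall>D\<in>set_pmf A. case run_det D xs of None \<Rightarrow> True | Some a \<Rightarrow> is_dup xs a))"

definition pseudo_det :: "nat \<Rightarrow> nat \<Rightarrow> rand_alg \<Rightarrow> bool" where
  "pseudo_det n k A \<longleftrightarrow> (\<forall>xs. fd_input n xs \<longrightarrow>
     (\<exists>S. finite S \<and> card S \<le> k \<and> S \<subseteq> {a. is_dup xs a} \<and>
        measure_pmf.prob A {D. \<exists>a\<in>S. run_det D xs = Some a}
          \<ge> (real k + 1) / (real k + 2)))"

definition uses_space :: "nat \<Rightarrow> nat \<Rightarrow> rand_alg \<Rightarrow> bool" where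
  "uses_space n S A \<longleftrightarrow> (\<forall>D\<in>set_pmf A. case D of (q0, delta, out) \<Rightarrow>
     q0 < 2 ^ S \<and> (\<forall>q < 2 ^ S. \<forall>a\<in>{1..n}. delta q a < 2 ^ S))"

end

theory Submission
  imports Defs
begin


lemma card_filter_indicator:
  "finite V \<Longrightarrow> real (card {u\<in>V. Q D u}) = (\<Sum>u\<in>V. indicator {D. Q D u} D)"
proof -
  assume fin: "finite V"
  have "real (card {u\<in>V. Q D u}) = (\<Sum>u\<in>{u\<in>V. Q D u}. 1)" by simp
  also have "\<dots> = (\<Sum>u\<in>V. if Q D u then 1 else 0)" by (rule sum.inter_filter[OF fin])
  finally show ?thesis by (simp add: indicator_def of_bool_def)
qed

lemma one_step:
  fixes A :: "'a pmf" and V :: "'u set"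
  assumes fin: "finite V" and pr: "\<forall>u\<in>V. measure_pmf.prob A {D. P D u} \<ge> 2/3"
  shows "\<exists>D\<in>set_pmf A. 2 * card {u\<in>V. \<not> P D u} \<le> card V"
proof (rule ccontr)
  assume "\<not> ?thesis"
  then have lt: "\<forall>D\<in>set_pmf A. card V < 2 * card {u\<in>V. \<not> P D u}" by auto
  have int: "\<And>u. integrable (measure_pmf A) (indicator {D. \<not> P D u} :: _ \<Rightarrow> real)"
    by (rule measure_pmf.integrable_const_bound[where B=1]) (auto simp: indicator_def)
  have "measure_pmf.expectation A (\<lambda>D. real (card {u\<in>V. \<not> P D u}))
      = measure_pmf.expectation A (\<lambda>D. \<Sum>u\<in>V. indicator {D. \<not> P D u} D)"
    using card_filter_indicator[OF fin, where Q="\<lambda>D u. \<not> P D u"] by simp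
  also have "\<dots> = (\<Sum>u\<in>V. measure_pmf.prob A {D. \<not> P D u})"
    by (subst Bochner_Integration.integral_sum) (auto simp: int)
  also have "\<dots> \<le> (\<Sum>u\<in>V. 1/3)"
  proof (rule sum_mono)
    fix u assume "u \<in> V"
    then have "measure_pmf.prob A {D. P D u} \<ge> 2/3" using pr by auto
    moreover have "measure_pmf.prob A {D. \<not> P D u} = 1 - measure_pmf.prob A {D. P D u}"
      using measure_pmf.prob_compl[of "{D. P D u}" A] by (simp add: Compl_eq_Diff_UNIV[symmetric] Collect_neg_eq)
    ultimately show "measure_pmf.prob A {D. \<not> P D u} \<le> 1/3" by simp
  qed
  finally have le: "measure_pmf.expectation A (\<lambda>D. real (card {u\<in>V. \<not> P D u})) \<le> card V / 3" by simp
  have ge: "real (card V) / 2 \<le> measure_pmf.expectation A (\<lambda>D. real (card {u\<in>V. \<not> P D u}))"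
  proof (rule measure_pmf.integral_ge_const)
    show "integrable (measure_pmf A) (\<lambda>D. real (card {u\<in>V. \<not> P D u}))"
      by (rule measure_pmf.integrable_const_bound[where B="card V"])
        (auto intro!: card_mono fin)
    show "AE D in measure_pmf A. real (card V) / 2 \<le> real (card {u\<in>V. \<not> P D u})"
      using lt by (auto simp: AE_measure_pmf_iff)
  qed
  from le ge have "card V = 0" by simp
  then have "V = {}" using fin by simp
  moreover obtain D where "D \<in> set_pmf A" using set_pmf_not_empty by fast
  ultimately show False using lt by auto
qed

lemma greedy:
  fixes A :: "'a pmf" and U :: "'u set"
  assumes fin: "finite U" and pr: "\<forall>u\<in>U. measure_pmf.prob A {D. P D u} \<ge> 2/3"
  shows "\<exists>Ds. length Ds = t \<and> set Ds \<subseteq> set_pmf A \<and>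
           2^t * card {u\<in>U. \<forall>D\<in>set Ds. \<not> P D u} \<le> card U"
proof (induction t)
  case 0 show ?case by (auto intro!: card_mono fin)
next
  case (Suc t)
  then obtain Ds where Ds: "length Ds = t" "set Ds \<subseteq> set_pmf A"
     "2^t * card {u\<in>U. \<forall>D\<in>set Ds. \<not> P D u} \<le> card U" by blast
  let ?V = "{u\<in>U. \<forall>D\<in>set Ds. \<not> P D u}"
  have "finite ?V" using fin by auto
  moreover have "\<forall>u\<in>?V. measure_pmf.prob A {D. P D u} \<ge> 2/3" using pr by auto
  ultimately obtain D where D: "D \<in> set_pmf A" "2 * card {u\<in>?V. \<not> P D u} \<le> card ?V"
    using one_step by blast
  have eq: "{u\<in>U. \<forall>D'\<in>set (D#Ds). \<not> P D' u} = {u\<in>?V. \<not> P D u}" by auto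
  have "2^Suc t * card {u\<in>?V. \<not> P D u} \<le> 2^t * card ?V" using D(2) by simp
  also have "\<dots> \<le> card U" by (rule Ds(3))
  finally show ?case using Ds D eq by (intro exI[of _ "D#Ds"]) auto
qed


lemma binom_ratio:
  "r \<le> m \<Longrightarrow> m \<le> n \<Longrightarrow>
   (real n / real m)^r * real ((n - r) choose (m - r)) \<le> real (n choose m)"
proof (induction r arbitrary: n m)
  case 0 then show ?case by simp
next
  case (Suc r)
  then have m1: "m \<ge> 1" by simp
  have key: "real m * real (n choose m) = real n * real ((n - 1) choose (m - 1))"
    using times_binomial_minus1_eq[of m n] m1 by (metis of_nat_mult zero_less_one le_trans less_le_trans)
  have "r \<le> m - 1" "m - 1 \<le> n - 1" using Suc.prems by auto
  from Suc.IH[OF this] have IH: "(real (n-1) / real (m-1))^r * real ((n - 1 - r) choose (m - 1 - r)) \<le> real ((n-1) choose (m-1))" .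
  have "(real n / real m)^r \<le> (real (n-1) / real (m-1))^r"
  proof (cases "r = 0")
    case False
    then have "m \<ge> 2" using Suc by simp
    then have "real n / real m \<le> real (n-1) / real (m-1)"
      using Suc.prems by (simp add: divide_simps of_nat_diff) (simp add: algebra_simps)
    then show ?thesis by (intro power_mono) auto
  qed simp
  then have "(real n / real m)^r * real ((n - 1 - r) choose (m - 1 - r)) \<le> real ((n-1) choose (m-1))"
    using IH by (meson dual_order.trans mult_right_mono of_nat_0_le_iff)
  then have "real n / real m * ((real n / real m)^r * real ((n - 1 - r) choose (m - 1 - r)))
       \<le> real n / real m * real ((n-1) choose (m-1))"
    by (intro mult_left_mono) auto
  also have "\<dots> = real (n choose m)" using key m1 by (simp add: field_simps)
  finally show ?case by (simp add: mult.assoc diff_diff_left del: of_nat_diff)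
qed

lemma count_super:
  assumes "r \<le> card R"
  shows "card {X. X \<subseteq> {1..n} \<and> card X = m \<and> R \<subseteq> X} \<le> (n - r) choose (m - r)"
proof (cases "finite R")
  case False
  then have "{X. X \<subseteq> {1..n} \<and> card X = m \<and> R \<subseteq> X} = {}"
    using finite_subset by (metis (no_types, lifting) empty_Collect_eq finite_atLeastAtMost subset_trans)
  then show ?thesis by (metis card.empty zero_le)
next
  case True
  obtain R' where R': "R' \<subseteq> R" "card R' = r" using obtain_subset_with_card_n[OF assms] by blast
  have finR': "finite R'" using R' True finite_subset by auto
  show ?thesis
  proof (cases "R' \<subseteq> {1..n}")
    case False
    then have "{X. X \<subseteq> {1..n} \<and> card X = m \<and> R \<subseteq> X} = {}" using R' by auto
    then show ?thesis by (metis card.empty zero_le)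
  next
    case True
    let ?P = "{X. X \<subseteq> {1..n} \<and> card X = m \<and> R \<subseteq> X}"
    let ?T = "{Y. Y \<subseteq> {1..n} - R' \<and> card Y = m - r}"
    have "card ?P \<le> card ?T"
    proof (rule card_inj_on_le[where f="\<lambda>X. X - R'"])
      show "inj_on (\<lambda>X. X - R') ?P"
        using R' by (auto simp: inj_on_def)
      show "(\<lambda>X. X - R') ` ?P \<subseteq> ?T"
      proof
        fix Y assume "Y \<in> (\<lambda>X. X - R') ` ?P"
        then obtain X where X: "X \<in> ?P" "Y = X - R'" by blast
        have "finite X" using X finite_subset by auto
        then have "card (X - R') = card X - card R'"
          using X R' by (intro card_Diff_subset) (auto intro: finite_subset)
        then show "Y \<in> ?T" using X R' by auto
      qed
      show "finite ?T" by auto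
    qed
    also have "card ?T = card ({1..n} - R') choose (m - r)" by (rule n_subsets) auto
    also have "card ({1..n} - R') = n - r" using True R' finR' by (simp add: card_Diff_subset)
    finally show ?thesis .
  qed
qed



definition yl :: "nat \<Rightarrow> nat \<Rightarrow> nat set \<Rightarrow> nat list" where
  "yl n l K = take l (sorted_list_of_set ({1..n} - K))"

definition SS :: "nat \<Rightarrow> rand_alg \<Rightarrow> nat list \<Rightarrow> nat set" where
  "SS k A xs = (SOME S. finite S \<and> card S \<le> k \<and> S \<subseteq> {a. is_dup xs a} \<and>
        measure_pmf.prob A {D. \<exists>a\<in>S. run_det D xs = Some a} \<ge> (real k + 1) / (real k + 2))"

primrec Kc :: "nat \<Rightarrow> nat \<Rightarrow> nat \<Rightarrow> rand_alg \<Rightarrow> nat set \<Rightarrow> nat \<Rightarrow> nat set" where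
  "Kc n l k A X 0 = {}"
| "Kc n l k A X (Suc j) = Kc n l k A X j \<union> SS k A (sorted_list_of_set X @ yl n l (Kc n l k A X j))"

lemma SS_spec:
  assumes "pseudo_det n k A" "fd_input n xs"
  shows "finite (SS k A xs) \<and> card (SS k A xs) \<le> k \<and> SS k A xs \<subseteq> {a. is_dup xs a} \<and>
        measure_pmf.prob A {D. \<exists>a\<in>SS k A xs. run_det D xs = Some a} \<ge> (real k + 1) / (real k + 2)"
  unfolding SS_def
  by (rule someI_ex) (use assms in \<open>auto simp: pseudo_det_def\<close>)

lemma yl_props:
  "distinct (yl n l K) \<and> set (yl n l K) \<subseteq> {1..n} - K"
  unfolding yl_def by (auto dest: in_set_takeD)

lemma yl_length:
  assumes "finite K" "l + card K \<le> n"
  shows "length (yl n l K) = l"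
proof -
  have "n - card K \<le> card ({1..n} - K)"
    using diff_card_le_card_Diff[OF assms(1), of "{1..n}"] by simp
  then show ?thesis unfolding yl_def using assms by simp
qed

lemma filter_eq_distinct:
  "distinct xs \<Longrightarrow> length (filter (\<lambda>y. y = a) xs) = (if a \<in> set xs then 1 else 0)"
  by (induction xs) auto

lemma dup_in_set: "is_dup xs a \<Longrightarrow> a \<in> set xs"
proof (rule ccontr)
  assume "is_dup xs a" "a \<notin> set xs"
  then have "filter (\<lambda>y. y = a) xs = []" by (auto simp: filter_empty_conv)
  with \<open>is_dup xs a\<close> show False unfolding is_dup_def by simp
qed

lemma dup_both:
  assumes "distinct xs" "distinct ys" "is_dup (xs @ ys) a"
  shows "a \<in> set xs \<and> a \<in> set ys"
  using assms filter_eq_distinct[OF assms(1), of a] filter_eq_distinct[OF assms(2), of a]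
  unfolding is_dup_def by (auto split: if_splits)

lemma fd_ok:
  assumes "X \<subseteq> {1..n}" "card X = m" "K \<subseteq> {1..n}" "l + card K \<le> n" "m + l = 3 * n div 2"
  shows "fd_input n (sorted_list_of_set X @ yl n l K)"
proof -
  have "finite X" "finite K" using assms finite_subset by auto
  then show ?thesis using assms yl_length[of K l n] yl_props[of n l K]
    unfolding fd_input_def by auto
qed

lemma run_det_alt: "run_det D xs = snd (snd D) (foldl (fst (snd D)) (fst D) xs)"
  unfolding run_det_def by (auto split: prod.splits)

lemma foldl_bound:
  assumes "\<forall>q < 2 ^ S. \<forall>a\<in>{1..n}. delta q a < (2::nat) ^ S" "set xs \<subseteq> {1..n}" "q < 2 ^ S"
  shows "foldl delta q xs < 2 ^ S"
  using assms by (induction xs arbitrary: q) auto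

lemma state_bound:
  assumes "uses_space n S A" "D \<in> set_pmf A" "set xs \<subseteq> {1..n}"
  shows "foldl (fst (snd D)) (fst D) xs < 2 ^ S"
proof -
  obtain q0 dl out where D: "D = (q0, dl, out)" by (cases D) auto
  then have "q0 < 2 ^ S \<and> (\<forall>q < 2 ^ S. \<forall>a\<in>{1..n}. dl q a < 2 ^ S)"
    using assms unfolding uses_space_def by fastforce
  then show ?thesis using foldl_bound[of S n dl xs q0] assms D by simp
qed

lemma Kc_mono: "i \<le> j \<Longrightarrow> Kc n l k A X i \<subseteq> Kc n l k A X j"
  by (induction j) (auto simp: le_Suc_eq)

lemma Kc_inv:
  assumes pd: "pseudo_det n k A" and X: "X \<subseteq> {1..n}" "card X = m"
    and len: "m + l = 3 * n div 2" "l + k * r \<le> n"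
  shows "j \<le> r \<Longrightarrow> Kc n l k A X j \<subseteq> {1..n} \<and> card (Kc n l k A X j) \<le> k * j"
proof (induction j)
  case 0 then show ?case by simp
next
  case (Suc j)
  let ?K = "Kc n l k A X j"
  have IH: "?K \<subseteq> {1..n}" "card ?K \<le> k * j" using Suc by auto
  have "k * j \<le> k * r" using Suc.prems by simp
  then have "l + card ?K \<le> n" using IH(2) len(2) by linarith
  then have fd: "fd_input n (sorted_list_of_set X @ yl n l ?K)"
    using fd_ok[OF X IH(1) _ len(1)] by simp
  note sp = SS_spec[OF pd fd]
  have "SS k A (sorted_list_of_set X @ yl n l ?K) \<subseteq> set (sorted_list_of_set X @ yl n l ?K)"
    using sp dup_in_set by blast
  also have "\<dots> \<subseteq> {1..n}" using fd unfolding fd_input_def by simp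
  finally have s1: "SS k A (sorted_list_of_set X @ yl n l ?K) \<subseteq> {1..n}" .
  have "card (Kc n l k A X (Suc j)) \<le> card ?K + card (SS k A (sorted_list_of_set X @ yl n l ?K))"
    by (simp add: card_Un_le)
  also have "\<dots> \<le> k * Suc j" using IH sp by simp
  finally show ?case using IH s1 by simp
qed



lemma core:
  fixes n k r S :: nat and A :: rand_alg
  assumes n: "n \<ge> 2" and k: "k \<ge> 1" and r: "r \<ge> 1" and kr: "4 * k * r \<le> n"
    and ze: "zero_error n A" and pd: "pseudo_det n k A" and us: "uses_space n S A"
  shows "real r * ln (4/3) \<le> ln 2 + real S * ln (real n)"
proof -
  define L where "L = 3 * n div 2"
  define m where "m = L - n + k * r"
  define l where "l = n - k * r"
  have L: "2 * L + 1 \<ge> 3 * n" "2 * L \<le> 3 * n" "L \<ge> n" unfolding L_def by auto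
  have "k * r \<le> n" using kr by simp
  have "r \<le> k * r" using k by simp
  have rm: "r \<le> m" unfolding m_def using \<open>r \<le> k*r\<close> L(3) by linarith
  have ml: "m + l = L" "l + k*r = n" "r \<le> m" "m \<le> n" "4 * m \<le> 3 * n"
    using L kr \<open>k * r \<le> n\<close> rm n unfolding m_def l_def by auto
  have mL: "m + l = 3 * n div 2" using ml L_def by simp
  obtain e where e: "2^e \<le> r" "r < 2^(e+1)" using ex_power_ivl1[of 2 r] r by auto
  define t where "t = e + 2"
  have t: "2 * r \<le> 2^t" "2^t \<le> 4 * r" using e unfolding t_def by auto
  define F where "F = {X. X \<subseteq> {1..n} \<and> card X = m}"
  define Q where "Q X j = sorted_list_of_set X @ yl n l (Kc n l k A X j)" for X j
  define cov where "cov D u = (\<exists>a\<in>SS k A (Q (fst u) (snd u)). run_det D (Q (fst u) (snd u)) = Some a)" for D u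
  define U where "U = F \<times> {..<r}"
  have finF: "finite F" unfolding F_def
    by (rule finite_subset[of _ "Pow {1..n}"]) auto
  have Kinv: "X \<in> F \<Longrightarrow> j \<le> r \<Longrightarrow> Kc n l k A X j \<subseteq> {1..n} \<and> card (Kc n l k A X j) \<le> k * r" for X j
  proof -
    assume a: "X \<in> F" "j \<le> r"
    then have X: "X \<subseteq> {1..n}" "card X = m" unfolding F_def by auto
    have "l + k * r \<le> n" using ml by simp
    from Kc_inv[OF pd X mL this a(2)] a(2) show ?thesis
      by (meson le_trans mult_le_mono2)
  qed
  have fdQ: "X \<in> F \<Longrightarrow> j \<le> r \<Longrightarrow> fd_input n (Q X j)" for X j
  proof -
    assume a: "X \<in> F" "j \<le> r"
    then have "l + card (Kc n l k A X j) \<le> n" using Kinv[OF a] ml by simp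
    then show ?thesis using fd_ok[of X n m "Kc n l k A X j" l] a Kinv[OF a] mL
      unfolding Q_def F_def by simp
  qed
  have pr: "\<forall>u\<in>U. measure_pmf.prob A {D. cov D u} \<ge> 2/3"
  proof
    fix u assume "u \<in> U"
    then obtain X j where u: "u = (X, j)" "X \<in> F" "j < r" unfolding U_def by auto
    have "(real k + 1) / (real k + 2) \<le> measure_pmf.prob A {D. cov D u}"
      using SS_spec[OF pd fdQ[OF u(2)], of j] u unfolding cov_def by simp
    moreover have "2/3 \<le> (real k + 1) / (real k + 2)" using k by (simp add: divide_simps)
    ultimately show "measure_pmf.prob A {D. cov D u} \<ge> 2/3" by linarith
  qed
  have finU: "finite U" unfolding U_def using finF by simp
  obtain Ds where Ds: "length Ds = t" "set Ds \<subseteq> set_pmf A"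
      "2^t * card {u\<in>U. \<forall>D\<in>set Ds. \<not> cov D u} \<le> card U"
    using greedy[OF finU pr, of t] by blast
  define Good where "Good = {X\<in>F. \<forall>j<r. \<exists>D\<in>set Ds. cov D (X,j)}"
  have "F - Good \<subseteq> fst ` {u\<in>U. \<forall>D\<in>set Ds. \<not> cov D u}"
  proof
    fix X assume "X \<in> F - Good"
    then obtain j where "j < r" "\<forall>D\<in>set Ds. \<not> cov D (X,j)" "X \<in> F" unfolding Good_def by auto
    then show "X \<in> fst ` {u\<in>U. \<forall>D\<in>set Ds. \<not> cov D u}" unfolding U_def
      by (intro image_eqI[of _ _ "(X,j)"]) auto
  qed
  moreover have "finite {u\<in>U. \<forall>D\<in>set Ds. \<not> cov D u}" using finU by simp
  ultimately have "card (F - Good) \<le> card {u\<in>U. \<forall>D\<in>set Ds. \<not> cov D u}"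
    by (meson card_image_le card_mono finite_imageI le_trans)
  then have c1: "card (F - Good) \<le> card {u\<in>U. \<forall>D\<in>set Ds. \<not> cov D u}" .
  have cU: "card U = card F * r" unfolding U_def by (simp add: card_cartesian_product)
  have "2 * r * card (F - Good) \<le> 2^t * card {u\<in>U. \<forall>D\<in>set Ds. \<not> cov D u}"
    using t(1) c1 by (rule mult_le_mono)
  also have "\<dots> \<le> card F * r" using Ds(3) cU by simp
  finally have "r * (2 * card (F - Good)) \<le> r * card F" by (simp add: mult_ac)
  then have "2 * card (F - Good) \<le> card F" using r by simp
  moreover have "Good \<subseteq> F" unfolding Good_def by auto
  then have "card F = card Good + card (F - Good)"
    using finF by (simp add: card_Diff_subset card_mono finite_subset)
  ultimately have FG: "card F \<le> 2 * card Good" by linarith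
  define KK where "KK = {K. K \<subseteq> {1..n} \<and> card K \<le> k * r}"
  define qs where "qs X = map (\<lambda>D. foldl (fst (snd D)) (fst D) (sorted_list_of_set X)) Ds" for X
  define Rs where "Rs q = {a. \<exists>i<t. \<exists>K\<in>KK. snd (snd (Ds!i)) (foldl (fst (snd (Ds!i))) (q!i) (yl n l K)) = Some a}" for q
  have Rs_run: "a \<in> Rs (qs X) \<longleftrightarrow> (\<exists>i<t. \<exists>K\<in>KK. run_det (Ds!i) (sorted_list_of_set X @ yl n l K) = Some a)" for X a
  proof -
    have qsi: "i < t \<Longrightarrow> qs X ! i = foldl (fst (snd (Ds!i))) (fst (Ds!i)) (sorted_list_of_set X)" for i
      unfolding qs_def using Ds(1) by simp
    show ?thesis
    proof
      assume "a \<in> Rs (qs X)"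
      then obtain i K where "i < t" "K \<in> KK"
        "snd (snd (Ds!i)) (foldl (fst (snd (Ds!i))) (qs X ! i) (yl n l K)) = Some a"
        unfolding Rs_def by blast
      then show "\<exists>i<t. \<exists>K\<in>KK. run_det (Ds!i) (sorted_list_of_set X @ yl n l K) = Some a"
        using qsi[of i] by (auto simp: run_det_alt)
    next
      assume "\<exists>i<t. \<exists>K\<in>KK. run_det (Ds!i) (sorted_list_of_set X @ yl n l K) = Some a"
      then obtain i K where iK: "i < t" "K \<in> KK" "run_det (Ds!i) (sorted_list_of_set X @ yl n l K) = Some a"
        by blast
      then have "snd (snd (Ds!i)) (foldl (fst (snd (Ds!i))) (qs X ! i) (yl n l K)) = Some a"
        using qsi[of i] by (simp add: run_det_alt)
      with iK(1,2) show "a \<in> Rs (qs X)" unfolding Rs_def by blast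
    qed
  qed
  have sub: "Rs (qs X) \<subseteq> X" if X: "X \<in> F" for X
  proof
    fix a assume "a \<in> Rs (qs X)"
    then obtain i K where iK: "i < t" "K \<in> KK" "run_det (Ds!i) (sorted_list_of_set X @ yl n l K) = Some a"
      using Rs_run by blast
    have D: "Ds!i \<in> set_pmf A" using Ds iK by auto
    have "l + card K \<le> n" using iK(2) ml unfolding KK_def by simp
    then have "fd_input n (sorted_list_of_set X @ yl n l K)"
      using fd_ok[of X n m K l] X iK(2) mL unfolding F_def KK_def by simp
    then have "is_dup (sorted_list_of_set X @ yl n l K) a"
      using ze D iK(3) unfolding zero_error_def by fastforce
    then have "a \<in> set (sorted_list_of_set X)"
      using dup_both[of "sorted_list_of_set X" "yl n l K" a] yl_props[of n l K] by simp
    moreover have "finite X" using X unfolding F_def by (auto intro: finite_subset)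
    ultimately show "a \<in> X" by simp
  qed
  have big: "r \<le> card (Rs (qs X))" if X: "X \<in> Good" for X
  proof -
    have XF: "X \<in> F" using X unfolding Good_def by simp
    define f where "f j = (SOME a. a \<in> SS k A (Q X j) \<and> (\<exists>D\<in>set Ds. run_det D (Q X j) = Some a))" for j
    have fj: "f j \<in> SS k A (Q X j) \<and> (\<exists>D\<in>set Ds. run_det D (Q X j) = Some (f j))" if jr: "j < r" for j
    proof -
      have "\<exists>a. a \<in> SS k A (Q X j) \<and> (\<exists>D\<in>set Ds. run_det D (Q X j) = Some a)"
      proof -
        obtain D a where "D \<in> set Ds" "a \<in> SS k A (Q X j)" "run_det D (Q X j) = Some a"
          using X jr unfolding Good_def cov_def by auto
        then show ?thesis by blast
      qed
      then show ?thesis unfolding f_def by (rule someI_ex)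
    qed
    have inR: "f j \<in> Rs (qs X)" if jr: "j < r" for j
    proof -
      obtain D where D: "D \<in> set Ds" "run_det D (Q X j) = Some (f j)" using fj[OF jr] by blast
      then obtain i where i: "i < t" "Ds ! i = D" using Ds(1) by (metis in_set_conv_nth)
      have "Kc n l k A X j \<in> KK" using Kinv[OF XF] jr unfolding KK_def by simp
      then show ?thesis using Rs_run i D unfolding Q_def by blast
    qed
    have notin: "f j \<notin> Kc n l k A X j" and inS: "f j \<in> Kc n l k A X (Suc j)" if jr: "j < r" for j
    proof -
      have "is_dup (Q X j) (f j)" using fj[OF jr] SS_spec[OF pd fdQ[OF XF, of j]] jr by auto
      then have "f j \<in> set (yl n l (Kc n l k A X j))"
        using dup_both[of "sorted_list_of_set X" "yl n l (Kc n l k A X j)" "f j"] yl_props[of n l]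
        unfolding Q_def by simp
      then show "f j \<notin> Kc n l k A X j" using yl_props[of n l "Kc n l k A X j"] by auto
      show "f j \<in> Kc n l k A X (Suc j)" using fj[OF jr] unfolding Q_def by simp
    qed
    have inj: "inj_on f {..<r}"
    proof (rule inj_onI)
      fix i j assume ij: "i \<in> {..<r}" "j \<in> {..<r}" "f i = f j"
      show "i = j"
      proof (rule ccontr)
        assume "i \<noteq> j"
        then consider "i < j" | "j < i" by linarith
        then show False
        proof cases
          case 1
          have "Kc n l k A X (Suc i) \<subseteq> Kc n l k A X j" using Kc_mono[of "Suc i" j n l k A X] 1 by simp
          moreover have "f i \<in> Kc n l k A X (Suc i)" using inS[of i] ij by simp
          ultimately have "f i \<in> Kc n l k A X j" by blast
          then show False using notin[of j] ij by auto
        next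
          case 2
          have "Kc n l k A X (Suc j) \<subseteq> Kc n l k A X i" using Kc_mono[of "Suc j" i n l k A X] 2 by simp
          moreover have "f j \<in> Kc n l k A X (Suc j)" using inS[of j] ij by simp
          ultimately have "f j \<in> Kc n l k A X i" by blast
          then show False using notin[of i] ij by auto
        qed
      qed
    qed
    have "Rs (qs X) \<subseteq> {1..n}" using sub[OF XF] XF unfolding F_def by auto
    then have "finite (Rs (qs X))" using finite_subset by blast
    then have "card {..<r} \<le> card (Rs (qs X))"
      using inj inR by (intro card_inj_on_le[of f]) auto
    then show ?thesis by simp
  qed
  define Qset where "Qset = {q. set q \<subseteq> {..<(2::nat)^S} \<and> length q = t}"
  define Piece where "Piece q = {X. X \<subseteq> {1..n} \<and> card X = m \<and> Rs q \<subseteq> X \<and> r \<le> card (Rs q)}" for q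
  have "Good \<subseteq> (\<Union>q\<in>Qset. Piece q)"
  proof
    fix X assume X: "X \<in> Good"
    then have XF: "X \<in> F" unfolding Good_def by simp
    have "X \<subseteq> {1..n}" using XF unfolding F_def by simp
    moreover then have "finite X" using finite_subset by blast
    ultimately have sX: "set (sorted_list_of_set X) \<subseteq> {1..n}" by simp
    have "\<forall>D\<in>set Ds. foldl (fst (snd D)) (fst D) (sorted_list_of_set X) < 2^S"
      using Ds(2) state_bound[OF us _ sX] by blast
    then have "qs X \<in> Qset" unfolding Qset_def qs_def using Ds(1) by auto
    moreover have "X \<in> Piece (qs X)" using XF sub[OF XF] big[OF X] unfolding Piece_def F_def by simp
    ultimately show "X \<in> (\<Union>q\<in>Qset. Piece q)" by blast
  qed
  moreover have finQ: "finite Qset" unfolding Qset_def by (rule finite_lists_length_eq) simp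
  moreover have "(\<Union>q\<in>Qset. Piece q) \<subseteq> Pow {1..n}" unfolding Piece_def by auto
  then have "finite (\<Union>q\<in>Qset. Piece q)" by (rule finite_subset) simp
  ultimately have "card Good \<le> card (\<Union>q\<in>Qset. Piece q)"
    by (intro card_mono) auto
  also have "\<dots> \<le> (\<Sum>q\<in>Qset. card (Piece q))" by (rule card_UN_le[OF finQ])
  also have "\<dots> \<le> (\<Sum>q\<in>Qset. (n - r) choose (m - r))"
  proof (rule sum_mono)
    fix q assume "q \<in> Qset"
    show "card (Piece q) \<le> (n - r) choose (m - r)"
    proof (cases "r \<le> card (Rs q)")
      case True
      then have "Piece q = {X. X \<subseteq> {1..n} \<and> card X = m \<and> Rs q \<subseteq> X}" unfolding Piece_def by auto
      then show ?thesis using count_super[OF True] by simp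
    next
      case False
      then have "Piece q = {}" unfolding Piece_def by auto
      then show ?thesis by (metis card.empty zero_le)
    qed
  qed
  also have "\<dots> = card Qset * ((n - r) choose (m - r))" by simp
  also have "card Qset = (2^S)^t" unfolding Qset_def by (subst card_lists_length_eq) auto
  finally have cG: "card Good \<le> 2^(S*t) * ((n - r) choose (m - r))" by (simp add: power_mult)
  have cF: "card F = n choose m" unfolding F_def using n_subsets[of "{1..n}" m] by simp
  have nat_ineq: "n choose m \<le> 2 * 2^(S*t) * ((n - r) choose (m - r))" using FG cG cF by linarith
  have pos: "0 < real ((n - r) choose (m - r))" using ml by simp
  have m0: "0 < m" using ml r by linarith
  have "(4/3::real)^r \<le> (real n / real m)^r"
    using ml(5) m0 by (intro power_mono) (auto simp: divide_simps)
  then have "(4/3::real)^r * real ((n - r) choose (m - r)) \<le> real (n choose m)"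
  proof -
    have "(4/3::real)^r * real ((n - r) choose (m - r)) \<le> (real n / real m)^r * real ((n - r) choose (m - r))"
      using \<open>(4/3::real)^r \<le> (real n / real m)^r\<close> pos by (intro mult_right_mono) auto
    then show ?thesis using binom_ratio[OF ml(3) ml(4)] by linarith
  qed
  also have "\<dots> \<le> 2 * 2^(S*t) * real ((n - r) choose (m - r))"
  proof -
    have "real (n choose m) \<le> real (2 * 2^(S*t) * ((n - r) choose (m - r)))"
      using nat_ineq by (simp only: of_nat_le_iff)
    then show ?thesis by simp
  qed
  finally have "(4/3::real)^r \<le> 2 * 2^(S*t)" using pos by simp
  then have "ln ((4/3::real)^r) \<le> ln (2 * 2^(S*t))" by (subst ln_le_cancel_iff) auto
  then have "real r * ln (4/3) \<le> ln 2 + real (S * t) * ln 2"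
    by (simp add: ln_mult ln_realpow)
  moreover have "real t * ln 2 \<le> ln (real n)"
  proof -
    have "real t * ln 2 = ln (2^t)" by (simp add: ln_realpow)
    also have "\<dots> \<le> ln (real n)"
    proof (subst ln_le_cancel_iff)
      have "4 * r \<le> 4 * k * r" using k by simp
      then have "(2::nat)^t \<le> n" using t kr by linarith
      then have "real ((2::nat)^t) \<le> real n" by (simp only: of_nat_le_iff)
      then show "(2::real)^t \<le> real n" by simp
    qed (use n in auto)
    finally show ?thesis .
  qed
  then have "real (S * t) * ln 2 \<le> real S * ln (real n)"
    by (simp add: mult.assoc mult_left_mono)
  ultimately show ?thesis by linarith
qed



lemma rep_fd: "1 \<le> a \<Longrightarrow> a \<le> n \<Longrightarrow> fd_input n (replicate (3 * n div 2) a)"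
  unfolding fd_input_def by auto

lemma rep_dup: "is_dup (replicate L a) b \<Longrightarrow> b = a"
  unfolding is_dup_def by (cases "b = a") auto

lemma k_pos: "n \<ge> 1 \<Longrightarrow> pseudo_det n k A \<Longrightarrow> k \<ge> 1"
proof (rule ccontr)
  assume n: "n \<ge> 1" and pd: "pseudo_det n k A" and "\<not> k \<ge> 1"
  then have k0: "k = 0" by simp
  obtain S where S: "finite S" "card S \<le> k"
    "measure_pmf.prob A {D. \<exists>a\<in>S. run_det D (replicate (3 * n div 2) 1) = Some a} \<ge> (real k + 1) / (real k + 2)"
    using pd rep_fd[of 1 n] n unfolding pseudo_det_def by blast
  then have "S = {}" using k0 by simp
  then show False using S(3) k0 by simp
qed

lemma S_pos:
  assumes n: "n \<ge> 2" and ze: "zero_error n A" and pd: "pseudo_det n k A" and us: "uses_space n 0 A"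
  shows False
proof -
  define x1 where "x1 = replicate (3 * n div 2) (1::nat)"
  define x2 where "x2 = replicate (3 * n div 2) (2::nat)"
  have f1: "fd_input n x1" and f2: "fd_input n x2" unfolding x1_def x2_def using rep_fd n by auto
  have none: "run_det D x1 = None" if D: "D \<in> set_pmf A" for D
  proof -
    obtain q0 dl out where Dq: "D = (q0, dl, out)" by (cases D) auto
    have st: "q0 < 1" "\<forall>q<1. \<forall>a\<in>{1..n}. dl q a < 1" using us D Dq unfolding uses_space_def by fastforce+
    have "foldl dl q0 xs = 0" if "set xs \<subseteq> {1..n}" for xs
      using foldl_bound[of 0 n dl xs q0] st that by simp
    then have e: "run_det D x1 = out 0" "run_det D x2 = out 0"
      using f1 f2 unfolding fd_input_def run_det_def Dq by auto
    show ?thesis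
    proof (cases "out 0")
      case (Some a)
      have "is_dup x1 a" "is_dup x2 a" using ze D f1 f2 e Some unfolding zero_error_def by fastforce+
      then have "a = 1" "a = 2" unfolding x1_def x2_def using rep_dup by blast+
      then show ?thesis by simp
    qed (use e in simp)
  qed
  obtain S where S: "measure_pmf.prob A {D. \<exists>a\<in>S. run_det D x1 = Some a} \<ge> (real k + 1) / (real k + 2)"
    using pd f1 unfolding pseudo_det_def by blast
  have "set_pmf A \<inter> {D. \<exists>a\<in>S. run_det D x1 = Some a} = {}" using none by auto
  then have "measure_pmf.prob A {D. \<exists>a\<in>S. run_det D x1 = Some a} = 0"
    by (simp add: measure_pmf_zero_iff)
  moreover have "(real k + 1) / (real k + 2) > 0" by simp
  ultimately show False using S by linarith
qed

theorem mainTheorem5: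
  shows "\<forall>C::real>0. \<exists>c::real>0. \<exists>N::nat. \<forall>n\<ge>N. \<forall>s::real>0. \<forall>k::nat. \<forall>A::rand_alg. \<forall>S::nat.
     real k \<le> C * real n / s \<longrightarrow> zero_error n A \<longrightarrow> pseudo_det n k A \<longrightarrow>
     uses_space n S A \<longrightarrow> real S \<ge> c * s / ln (real n)"
proof (intro allI impI)
  fix C :: real assume C: "C > 0"
  show "\<exists>c::real>0. \<exists>N::nat. \<forall>n\<ge>N. \<forall>s::real>0. \<forall>k::nat. \<forall>A::rand_alg. \<forall>S::nat.
     real k \<le> C * real n / s \<longrightarrow> zero_error n A \<longrightarrow> pseudo_det n k A \<longrightarrow>
     uses_space n S A \<longrightarrow> real S \<ge> c * s / ln (real n)"
  proof (intro exI[of _ "1 / (40 * C)"] conjI exI[of _ "3::nat"] allI impI)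
    show "0 < 1 / (40 * C)" using C by simp
    fix n :: nat and s :: real and k :: nat and A :: rand_alg and S :: nat
    assume n: "3 \<le> n" and s: "0 < s" and hk: "real k \<le> C * real n / s"
      and ze: "zero_error n A" and pd: "pseudo_det n k A" and us: "uses_space n S A"
    have k: "k \<ge> 1" using k_pos[OF _ pd] n by simp
    have S1: "S \<ge> 1" using S_pos[OF _ ze pd] us n by (cases S) auto
    have ln3: "ln (real n) \<ge> 1"
    proof -
      have "exp 1 \<le> (3::real)" using exp_le by simp
      also have "\<dots> \<le> real n" using n by simp
      finally have "ln (exp 1) \<le> ln (real n)" using n by (subst ln_le_cancel_iff) auto
      then show ?thesis by simp
    qed
    define u where "u = real n / real k"
    have ks: "real k * s \<le> C * real n" using hk s by (simp add: field_simps)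
    have cs: "1 / (40 * C) * s \<le> u / 40"
    proof -
      have "s \<le> C * real n / real k" using ks k by (simp add: field_simps)
      then have "1 / (40 * C) * s \<le> 1 / (40 * C) * (C * real n / real k)"
        using C by (intro mult_left_mono) auto
      also have "\<dots> = u / 40" unfolding u_def using C by (simp add: field_simps)
      finally show ?thesis .
    qed
    have main: "1 / (40 * C) * s \<le> real S * ln (real n)"
    proof (cases "n < 40 * k")
      case True
      then have "u < 40" unfolding u_def using k by (simp add: divide_simps)
      moreover have "1 * 1 \<le> real S * ln (real n)" using S1 ln3
        by (intro mult_mono) auto
      ultimately show ?thesis using cs by linarith
    next
      case False
      then have u40: "u \<ge> 40" unfolding u_def using k by (simp add: divide_simps)
      define r where "r = n div (4 * k)"
      have "n div (4*k) * (4*k) + n mod (4*k) = n" by (rule div_mult_mod_eq)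
      then have dm: "4*k*r + n mod (4*k) = n" unfolding r_def by (simp add: mult.commute)
      then have kr: "4 * k * r \<le> n" by linarith
      have "n mod (4*k) < 4*k" using k by simp
      then have nlt: "n < 4 * k * (r + 1)" using dm by simp
      have "10 * (4 * k) \<le> n" using False by simp
      then have "(10 * (4 * k)) div (4*k) \<le> r" unfolding r_def by (rule div_le_mono)
      then have "10 \<le> r" using k by simp
      have c: "real r * ln (4/3) \<le> ln 2 + real S * ln (real n)"
        using core[OF _ k _ kr ze pd us] n \<open>10 \<le> r\<close> by simp
      have l43: "ln (4/3::real) \<ge> 1/4"
      proof -
        have "ln (3/4::real) \<le> 3/4 - 1" by (rule ln_le_minus_one) simp
        moreover have "ln (4/3::real) = - ln (3/4)" by (simp add: ln_div)
        ultimately show ?thesis by simp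
      qed
      have l2: "ln (2::real) \<le> 1" using ln_le_minus_one[of 2] by simp
      have "real r * (1/4) \<le> real r * ln (4/3)" using l43 by (intro mult_left_mono) auto
      have "real n < real (4 * k * (r + 1))" using nlt by (simp only: of_nat_less_iff)
      then have "real n < 4 * real k * (real r + 1)" by (simp add: algebra_simps)
      then have "u < 4 * (real r + 1)" unfolding u_def using k by (simp add: divide_simps algebra_simps)
      then have r1: "real r / 4 > u / 16 - 1/4" by simp
      have "real r / 4 \<le> ln 2 + real S * ln (real n)"
        using c \<open>real r * (1/4) \<le> real r * ln (4/3)\<close> by simp
      then have "real S * ln (real n) \<ge> real r / 4 - 1" using l2 by linarith
      then have "real S * ln (real n) \<ge> u / 40" using r1 u40 by linarith
      then show ?thesis using cs by linarith
    qed
    have lnpos: "0 < ln (real n)" using ln3 by simp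
    show "1 / (40 * C) * s / ln (real n) \<le> real S" by (subst pos_divide_le_eq[OF lnpos]) (rule main)
  qed
qed


end
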